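(* Let $H$ be a finitely generated free abelian group. Then \[\ker\big(\mathrm{id}+*:\mathcal{P}(H)\to\mathcal{P}(H)\big)=\mathrm{im}\big(\mathrm{id}-*:\mathcal{P}(H)\to\mathcal{P}(H)\big)\] and \[\ker\big(\mathrm{id}+*:\mathcal{P}_T(H)\to\mathcal{P}_T(H)\big)=\mathrm{im}\big(\mathrm{id}-*:\mathcal{P}_T(H)\to\mathcal{P}_T(H)\big).\]
   Context: $V_H=H\otimes_{\mathbb{Z}}\mathbb{R}$. An integral polytope is the convex hull of a nonempty finite subset of $H\subseteq V_H$. $\mathcal{P}(H)$ is the Grothendieck group of the monoid of integral polytopes under Minkowski sum, and $\mathcal{P}_T(H)$ is the cokernel of $H\to\mathcal{P}(H)$, $h\mapsto\{h\}$. The involution $*$ is induced by $P\mapsto *P=\{-p:p\in P\}$, i.e. $*(P-Q)=*P-*Q$, on both groups. *)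

theory Defs
  imports "HOL-Analysis.Analysis"
begin

text \<open>The free abelian group H of rank n is modelled as the integer lattice Z^n
  inside V_H = R^n, with n given by a finite index type.\<close>

definition lattice :: "(real ^ 'n) set" where
  "lattice = {x. \<forall>i. x $ i \<in> \<int>}"

definition integral_polytope :: "(real ^ 'n) set \<Rightarrow> bool" where
  "integral_polytope P \<longleftrightarrow>
     (\<exists>S. finite S \<and> S \<noteq> {} \<and> S \<subseteq> lattice \<and> P = convex hull S)"

definition minkowski :: "(real ^ 'n) set \<Rightarrow> (real ^ 'n) set \<Rightarrow> (real ^ 'n) set" where
  "minkowski A B = {a + b | a b. a \<in> A \<and> b \<in> B}"

definition reflect :: "(real ^ 'n) set \<Rightarrow> (real ^ 'n) set" where
  "reflect P = {- p | p. p \<in> P}"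

text \<open>Grothendieck group P(H): elements are formal differences [P] - [Q] of integral
  polytopes, represented by pairs (P,Q), modulo the Grothendieck relation.\<close>

type_synonym 'n gpair = "(real ^ 'n) set \<times> (real ^ 'n) set"

definition gpair :: "('n::finite) gpair \<Rightarrow> bool" where
  "gpair x \<longleftrightarrow> integral_polytope (fst x) \<and> integral_polytope (snd x)"

definition groth_eq :: "('n::finite) gpair \<Rightarrow> ('n::finite) gpair \<Rightarrow> bool" where
  "groth_eq x y \<longleftrightarrow> (\<exists>R. integral_polytope R \<and>
      minkowski (minkowski (fst x) (snd y)) R = minkowski (minkowski (fst y) (snd x)) R)"

definition gadd :: "('n::finite) gpair \<Rightarrow> ('n::finite) gpair \<Rightarrow> ('n::finite) gpair" where
  "gadd x y = (minkowski (fst x) (fst y), minkowski (snd x) (snd y))"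

definition gneg :: "('n::finite) gpair \<Rightarrow> ('n::finite) gpair" where
  "gneg x = (snd x, fst x)"

definition gzero :: "('n::finite) gpair" where
  "gzero = ({0}, {0})"

definition gof :: "(real ^ 'n) set \<Rightarrow> ('n::finite) gpair" where
  "gof P = (P, {0})"

definition gstar :: "('n::finite) gpair \<Rightarrow> ('n::finite) gpair" where
  "gstar x = (reflect (fst x), reflect (snd x))"

text \<open>P_T(H) = P(H) / image of H, h \<mapsto> [{h}]: two elements are equal in P_T(H)
  iff their difference is [{h}] for some h in H.\<close>
definition gT_eq :: "('n::finite) gpair \<Rightarrow> ('n::finite) gpair \<Rightarrow> bool" where
  "gT_eq x y \<longleftrightarrow> (\<exists>h\<in>lattice. groth_eq (gadd x (gneg y)) (gof {h}))"

end

theory Submission imports Defs begin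

definition sf :: "(real ^ 'n::finite) set \<Rightarrow> real ^ 'n \<Rightarrow> real" where
  "sf X u = Sup ((\<lambda>x. u \<bullet> x) ` X)"

definition good :: "(real ^ 'n::finite) set \<Rightarrow> bool" where
  "good X \<longleftrightarrow> compact X \<and> convex X \<and> X \<noteq> {}"

lemma mink_plus: "minkowski A B = A + B"
  by (auto simp: minkowski_def set_plus_def)

lemma reflect_img: "reflect A = uminus ` A"
  by (auto simp: reflect_def)

lemma sf_eqI: "z \<in> X \<Longrightarrow> (\<And>x. x \<in> X \<Longrightarrow> u \<bullet> x \<le> u \<bullet> z) \<Longrightarrow> sf X u = u \<bullet> z"
  unfolding sf_def by (rule cSup_eq_maximum) auto

lemma sf_attained:
  assumes "good (X::(real ^ 'n::finite) set)"
  shows "\<exists>z\<in>X. (\<forall>x\<in>X. u \<bullet> x \<le> u \<bullet> z) \<and> sf X u = u \<bullet> z"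
proof -
  have "\<exists>z\<in>X. \<forall>x\<in>X. u \<bullet> x \<le> u \<bullet> z"
    using assms unfolding good_def
    by (intro continuous_attains_sup) (auto intro!: continuous_intros)
  then show ?thesis using sf_eqI by blast
qed

lemma good_mink: "good A \<Longrightarrow> good B \<Longrightarrow> good (minkowski A B)"
proof -
  assume a: "good A" "good B"
  have "compact {x + y |x y. x \<in> A \<and> y \<in> B}"
    using a by (intro compact_sums) (auto simp: good_def)
  then have c: "compact (minkowski A B)" by (simp add: minkowski_def)
  have v: "convex (minkowski A B)" unfolding mink_plus
    using a by (intro convex_set_plus) (auto simp: good_def)
  obtain p q where "p \<in> A" "q \<in> B" using a by (auto simp: good_def)
  then have "p + q \<in> minkowski A B" by (auto simp: minkowski_def)
  then show ?thesis using c v by (auto simp: good_def)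
qed

lemma good_reflect: "good A \<Longrightarrow> good (reflect A)"
  unfolding good_def reflect_img
  using compact_negations[of A] convex_negations[of A] by auto

lemma ip_good: "integral_polytope P \<Longrightarrow> good P"
  unfolding integral_polytope_def good_def
  using finite_imp_compact_convex_hull by auto

lemma sf_mink:
  assumes "good A" "good B"
  shows "sf (minkowski A B) u = sf A u + sf B u"
proof -
  obtain a where a: "a \<in> A" "\<forall>x\<in>A. u \<bullet> x \<le> u \<bullet> a" "sf A u = u \<bullet> a"
    using sf_attained[OF assms(1)] by blast
  obtain b where b: "b \<in> B" "\<forall>x\<in>B. u \<bullet> x \<le> u \<bullet> b" "sf B u = u \<bullet> b"
    using sf_attained[OF assms(2)] by blast
  have "sf (minkowski A B) u = u \<bullet> (a + b)"
    apply (rule sf_eqI)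
    using a b by (auto simp: minkowski_def inner_add_right intro!: add_mono)
  then show ?thesis using a b by (simp add: inner_add_right)
qed

lemma sf_reflect:
  assumes "good A"
  shows "sf (reflect A) u = sf A (- u)"
proof -
  obtain a where a: "a \<in> A" "\<forall>x\<in>A. (-u) \<bullet> x \<le> (-u) \<bullet> a" "sf A (-u) = (-u) \<bullet> a"
    using sf_attained[OF assms] by blast
  have "sf (reflect A) u = u \<bullet> (-a)"
    apply (rule sf_eqI)
    using a by (auto simp: reflect_def)
  then show ?thesis using a by simp
qed

lemma sf_single: "sf {h} u = u \<bullet> h"
  by (rule sf_eqI) auto

lemma good_single: "good {h}"
  by (simp add: good_def)

lemma good_eq:
  assumes "good X" "good Y" "\<And>u. sf X u = sf Y u"
  shows "X = Y"
proof -
  have sub: "X \<subseteq> Y" if gX: "good X" and gY: "good Y" and e: "\<And>u. sf X u = sf Y u" for X Y :: "(real ^ 'n) set"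
  proof
    fix z assume z: "z \<in> X"
    show "z \<in> Y"
    proof (rule ccontr)
      assume "z \<notin> Y"
      then obtain a b where ab: "a \<bullet> z < b" "\<forall>x\<in>Y. a \<bullet> x > b"
        using separating_hyperplane_closed_point[of Y z] gY
        by (auto simp: good_def compact_imp_closed)
      obtain y where y: "y \<in> Y" "sf Y (-a) = (-a) \<bullet> y"
        using sf_attained[OF gY] by blast
      obtain w where w: "w \<in> X" "\<forall>x\<in>X. (-a) \<bullet> x \<le> (-a) \<bullet> w" "sf X (-a) = (-a) \<bullet> w"
        using sf_attained[OF gX] by blast
      have "(-a) \<bullet> z \<le> (-a) \<bullet> w" using w z by blast
      moreover have "sf X (-a) = sf Y (-a)" using e by blast
      ultimately show False using ab y w by auto
    qed
  qed
  show ?thesis using sub[OF assms] sub[OF assms(2,1)] assms(3) by auto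
qed

lemma lattice_add: "a \<in> lattice \<Longrightarrow> b \<in> lattice \<Longrightarrow> a + b \<in> lattice"
  by (auto simp: lattice_def)

lemma lattice_neg: "a \<in> lattice \<Longrightarrow> - a \<in> lattice"
  by (auto simp: lattice_def)

lemma lattice_zero: "0 \<in> lattice"
  by (auto simp: lattice_def)

lemma ip_zero: "integral_polytope {0}"
  unfolding integral_polytope_def using lattice_zero
  by (intro exI[of _ "{0}"]) auto

lemma ip_mink: "integral_polytope A \<Longrightarrow> integral_polytope B \<Longrightarrow> integral_polytope (minkowski A B)"
proof -
  assume "integral_polytope A" "integral_polytope B"
  then obtain S T where S: "finite S" "S \<noteq> {}" "S \<subseteq> lattice" "A = convex hull S"
    and T: "finite T" "T \<noteq> {}" "T \<subseteq> lattice" "B = convex hull T"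
    unfolding integral_polytope_def by blast
  have "minkowski A B = convex hull (S + T)"
    by (simp add: mink_plus convex_hull_set_plus S T)
  moreover have "finite (S + T)" using S T by (simp add: finite_set_plus)
  moreover have "S + T \<noteq> {}"
  proof -
    obtain s t where "s \<in> S" "t \<in> T" using S(2) T(2) by blast
    then have "s + t \<in> S + T" by (rule set_plus_intro)
    then show ?thesis by blast
  qed
  moreover have "S + T \<subseteq> lattice" using S T lattice_add by (auto simp: set_plus_def)
  ultimately show ?thesis unfolding integral_polytope_def by blast
qed

lemma ip_reflect: "integral_polytope A \<Longrightarrow> integral_polytope (reflect A)"
proof -
  assume "integral_polytope A"
  then obtain S where S: "finite S" "S \<noteq> {}" "S \<subseteq> lattice" "A = convex hull S"
    unfolding integral_polytope_def by blast
  have "reflect A = convex hull (uminus ` S)"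
    by (simp add: reflect_img S convex_hull_linear_image linear_uminus)
  moreover have "uminus ` S \<subseteq> lattice" using S lattice_neg by auto
  ultimately show ?thesis unfolding integral_polytope_def using S by blast
qed

lemma ip_hull_union:
  assumes "integral_polytope P" "integral_polytope Q"
  shows "\<exists>C. integral_polytope C \<and> (\<forall>u. sf C u = max (sf P u) (sf Q u))"
proof -
  obtain S T where S: "finite S" "S \<noteq> {}" "S \<subseteq> lattice" "P = convex hull S"
    and T: "finite T" "T \<noteq> {}" "T \<subseteq> lattice" "Q = convex hull T"
    using assms unfolding integral_polytope_def by blast
  define C where "C = convex hull (S \<union> T)"
  have ipC: "integral_polytope C" unfolding integral_polytope_def C_def using S T by blast
  have "sf C u = max (sf P u) (sf Q u)" for u
  proof -
    obtain p where p: "p \<in> P" "\<forall>x\<in>P. u \<bullet> x \<le> u \<bullet> p" "sf P u = u \<bullet> p"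
      using sf_attained[OF ip_good[OF assms(1)]] by blast
    obtain q where q: "q \<in> Q" "\<forall>x\<in>Q. u \<bullet> x \<le> u \<bullet> q" "sf Q u = u \<bullet> q"
      using sf_attained[OF ip_good[OF assms(2)]] by blast
    define z where "z = (if u \<bullet> p \<le> u \<bullet> q then q else p)"
    have PC: "P \<subseteq> C" unfolding C_def S(4) by (rule hull_mono) blast
    have QC: "Q \<subseteq> C" unfolding C_def T(4) by (rule hull_mono) blast
    have zC: "z \<in> C" using p(1) q(1) PC QC unfolding z_def by (cases "u \<bullet> p \<le> u \<bullet> q") auto
    have "C \<subseteq> {x. u \<bullet> x \<le> u \<bullet> z}"
      unfolding C_def
    proof (rule hull_minimal)
      show "S \<union> T \<subseteq> {x. u \<bullet> x \<le> u \<bullet> z}"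
      proof -
        have zP: "\<forall>x\<in>P. u \<bullet> x \<le> u \<bullet> z" using p(2) q(2) unfolding z_def by (cases "u \<bullet> p \<le> u \<bullet> q") force+
        have zQ: "\<forall>x\<in>Q. u \<bullet> x \<le> u \<bullet> z" using p(2) q(2) unfolding z_def by (cases "u \<bullet> p \<le> u \<bullet> q") force+
        have "S \<subseteq> P" unfolding S(4) by (rule hull_subset)
        moreover have "T \<subseteq> Q" unfolding T(4) by (rule hull_subset)
        ultimately show ?thesis using zP zQ by blast
      qed
      show "convex {x. u \<bullet> x \<le> u \<bullet> z}" by (rule convex_halfspace_le)
    qed
    then have "sf C u = u \<bullet> z" using zC by (intro sf_eqI) auto
    then show ?thesis using p(3) q(3) unfolding z_def by (cases "u \<bullet> p \<le> u \<bullet> q") auto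
  qed
  then show ?thesis using ipC by blast
qed

lemma maxlem: "(a::real) + a' = b + b' \<Longrightarrow> max a b + a' = max a' b' + b"
  by (cases "a \<le> b") (simp_all add: max_def)

lemmas ss = sf_mink sf_reflect sf_single good_mink good_reflect good_single ip_good

lemma main1:
  assumes P: "integral_polytope P" and Q: "integral_polytope Q"
  defines "K \<equiv> (\<forall>u. sf P u + sf P (-u) = sf Q u + sf Q (-u))"
  shows "groth_eq (gadd (P,Q) (gstar (P,Q))) gzero \<Longrightarrow> K"
    and "K \<Longrightarrow> groth_eq (gadd (P,Q) (gstar (P,Q))) gzero"
    and "gT_eq (gadd (P,Q) (gstar (P,Q))) gzero \<Longrightarrow> K"
    and "K \<Longrightarrow> gT_eq (gadd (P,Q) (gstar (P,Q))) gzero"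
    and "gpair y \<Longrightarrow> groth_eq (P,Q) (gadd y (gneg (gstar y))) \<Longrightarrow> K"
    and "gpair y \<Longrightarrow> gT_eq (P,Q) (gadd y (gneg (gstar y))) \<Longrightarrow> K"
    and "K \<Longrightarrow> \<exists>y. gpair y \<and> groth_eq (P,Q) (gadd y (gneg (gstar y)))"
    and "K \<Longrightarrow> \<exists>y. gpair y \<and> gT_eq (P,Q) (gadd y (gneg (gstar y)))"
proof -
  note gP = ip_good[OF P] and gQ = ip_good[OF Q]
  show "groth_eq (gadd (P,Q) (gstar (P,Q))) gzero \<Longrightarrow> K"
  proof -
    assume "groth_eq (gadd (P,Q) (gstar (P,Q))) gzero"
    then obtain R where R: "integral_polytope R"
      "minkowski (minkowski (minkowski P (reflect P)) {0}) R = minkowski (minkowski {0} (minkowski Q (reflect Q))) R"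
      by (auto simp: groth_eq_def gadd_def gstar_def gzero_def)
    note gR = ip_good[OF R(1)]
    show K unfolding K_def
    proof
      fix u
      have "sf (minkowski (minkowski (minkowski P (reflect P)) {0}) R) u = sf (minkowski (minkowski {0} (minkowski Q (reflect Q))) R) u"
        using R(2) by simp
      then show "sf P u + sf P (-u) = sf Q u + sf Q (-u)" using gP gQ gR by (simp add: ss)
    qed
  qed
  show "K \<Longrightarrow> groth_eq (gadd (P,Q) (gstar (P,Q))) gzero"
  proof -
    assume K: K
    have "minkowski (minkowski (minkowski P (reflect P)) {0}) {0} = minkowski (minkowski {0} (minkowski Q (reflect Q))) {0}"
      apply (rule good_eq)
      using gP gQ K unfolding K_def by (simp_all add: ss)
    then show ?thesis using ip_zero by (auto simp: groth_eq_def gadd_def gstar_def gzero_def)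
  qed
  show "gT_eq (gadd (P,Q) (gstar (P,Q))) gzero \<Longrightarrow> K"
  proof -
    assume "gT_eq (gadd (P,Q) (gstar (P,Q))) gzero"
    then obtain R h where R: "integral_polytope R"
      "minkowski (minkowski (minkowski (minkowski P (reflect P)) {0}) {0}) R = minkowski (minkowski {h} (minkowski (minkowski Q (reflect Q)) {0})) R"
      by (auto simp: gT_eq_def groth_eq_def gadd_def gstar_def gzero_def gneg_def gof_def)
    note gR = ip_good[OF R(1)]
    show K unfolding K_def
    proof
      fix u
      have "sf (minkowski (minkowski (minkowski (minkowski P (reflect P)) {0}) {0}) R) u = sf (minkowski (minkowski {h} (minkowski (minkowski Q (reflect Q)) {0})) R) u"
        using R(2) by simp
      moreover have "sf (minkowski (minkowski (minkowski (minkowski P (reflect P)) {0}) {0}) R) (-u) = sf (minkowski (minkowski {h} (minkowski (minkowski Q (reflect Q)) {0})) R) (-u)"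
        using R(2) by simp
      ultimately show "sf P u + sf P (-u) = sf Q u + sf Q (-u)" using gP gQ gR by (simp add: ss)
    qed
  qed
  show "K \<Longrightarrow> gT_eq (gadd (P,Q) (gstar (P,Q))) gzero"
  proof -
    assume K: K
    have "minkowski (minkowski (minkowski (minkowski P (reflect P)) {0}) {0}) {0} = minkowski (minkowski {0} (minkowski (minkowski Q (reflect Q)) {0})) {0}"
      apply (rule good_eq)
      using gP gQ K unfolding K_def by (simp_all add: ss)
    then show ?thesis using ip_zero lattice_zero
      by (auto simp: gT_eq_def groth_eq_def gadd_def gstar_def gzero_def gneg_def gof_def)
  qed
  show "gpair y \<Longrightarrow> groth_eq (P,Q) (gadd y (gneg (gstar y))) \<Longrightarrow> K"
  proof -
    assume "gpair y" "groth_eq (P,Q) (gadd y (gneg (gstar y)))"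
    then obtain A B R where AB: "integral_polytope A" "integral_polytope B" and R: "integral_polytope R"
      "minkowski (minkowski P (minkowski B (reflect A))) R = minkowski (minkowski (minkowski A (reflect B)) Q) R"
      by (cases y) (auto simp: gpair_def groth_eq_def gadd_def gstar_def gneg_def)
    note gR = ip_good[OF R(1)] and gA = ip_good[OF AB(1)] and gB = ip_good[OF AB(2)]
    show K unfolding K_def
    proof
      fix u
      have "sf (minkowski (minkowski P (minkowski B (reflect A))) R) u = sf (minkowski (minkowski (minkowski A (reflect B)) Q) R) u"
        using R(2) by simp
      moreover have "sf (minkowski (minkowski P (minkowski B (reflect A))) R) (-u) = sf (minkowski (minkowski (minkowski A (reflect B)) Q) R) (-u)"
        using R(2) by simp
      ultimately show "sf P u + sf P (-u) = sf Q u + sf Q (-u)" using gP gQ gR gA gB by (simp add: ss)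
    qed
  qed
  show "gpair y \<Longrightarrow> gT_eq (P,Q) (gadd y (gneg (gstar y))) \<Longrightarrow> K"
  proof -
    assume "gpair y" "gT_eq (P,Q) (gadd y (gneg (gstar y)))"
    then obtain A B R h where AB: "integral_polytope A" "integral_polytope B" and R: "integral_polytope R"
      "minkowski (minkowski (minkowski P (minkowski B (reflect A))) {0}) R = minkowski (minkowski {h} (minkowski Q (minkowski A (reflect B)))) R"
      by (cases y) (auto simp: gpair_def gT_eq_def groth_eq_def gadd_def gstar_def gneg_def gof_def)
    note gR = ip_good[OF R(1)] and gA = ip_good[OF AB(1)] and gB = ip_good[OF AB(2)]
    show K unfolding K_def
    proof
      fix u
      have "sf (minkowski (minkowski (minkowski P (minkowski B (reflect A))) {0}) R) u = sf (minkowski (minkowski {h} (minkowski Q (minkowski A (reflect B)))) R) u"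
        using R(2) by simp
      moreover have "sf (minkowski (minkowski (minkowski P (minkowski B (reflect A))) {0}) R) (-u) = sf (minkowski (minkowski {h} (minkowski Q (minkowski A (reflect B)))) R) (-u)"
        using R(2) by simp
      ultimately show "sf P u + sf P (-u) = sf Q u + sf Q (-u)" using gP gQ gR gA gB by (simp add: ss)
    qed
  qed
  show "K \<Longrightarrow> \<exists>y. gpair y \<and> groth_eq (P,Q) (gadd y (gneg (gstar y)))"
  proof -
    assume K: K
    obtain C where C: "integral_polytope C" "\<And>u. sf C u = max (sf P u) (sf Q u)"
      using ip_hull_union[OF P Q] by blast
    note gC = ip_good[OF C(1)]
    have Ku: "sf P u + sf P (-u) = sf Q u + sf Q (-u)" for u using K unfolding K_def by blast
    have "minkowski (minkowski P (minkowski C (reflect P))) {0} = minkowski (minkowski (minkowski P (reflect C)) Q) {0}"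
      apply (rule good_eq)
      using gP gQ gC apply (simp_all add: ss C(2))
      subgoal for u using maxlem[OF Ku[of u]] by linarith
      done
    then have "groth_eq (P,Q) (gadd (P,C) (gneg (gstar (P,C))))"
      using ip_zero by (auto simp: groth_eq_def gadd_def gstar_def gneg_def)
    moreover have "gpair (P,C)" using P C(1) by (simp add: gpair_def)
    ultimately show ?thesis by blast
  qed
  show "K \<Longrightarrow> \<exists>y. gpair y \<and> gT_eq (P,Q) (gadd y (gneg (gstar y)))"
  proof -
    assume K: K
    obtain C where C: "integral_polytope C" "\<And>u. sf C u = max (sf P u) (sf Q u)"
      using ip_hull_union[OF P Q] by blast
    note gC = ip_good[OF C(1)]
    have Ku: "sf P u + sf P (-u) = sf Q u + sf Q (-u)" for u using K unfolding K_def by blast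
    have "minkowski (minkowski (minkowski P (minkowski C (reflect P))) {0}) {0} = minkowski (minkowski {0} (minkowski Q (minkowski P (reflect C)))) {0}"
      apply (rule good_eq)
      using gP gQ gC apply (simp_all add: ss C(2))
      subgoal for u using maxlem[OF Ku[of u]] by linarith
      done
    then have "gT_eq (P,Q) (gadd (P,C) (gneg (gstar (P,C))))"
      using ip_zero lattice_zero by (auto simp: gT_eq_def groth_eq_def gadd_def gstar_def gneg_def gof_def)
    moreover have "gpair (P,C)" using P C(1) by (simp add: gpair_def)
    ultimately show ?thesis by blast
  qed
qed

theorem theorem6p3:
  fixes x :: "'n::finite gpair"
  assumes "gpair x"
  shows "(groth_eq (gadd x (gstar x)) gzero \<longleftrightarrow>
           (\<exists>y. gpair y \<and> groth_eq x (gadd y (gneg (gstar y)))))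
       \<and> (gT_eq (gadd x (gstar x)) gzero \<longleftrightarrow>
           (\<exists>y. gpair y \<and> gT_eq x (gadd y (gneg (gstar y)))))"
proof -
  obtain P Q where x: "x = (P,Q)" by (cases x)
  have P: "integral_polytope P" and Q: "integral_polytope Q" using assms x by (auto simp: gpair_def)
  show ?thesis unfolding x using main1[OF P Q] by blast
qed

end
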